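(* Let $P$ be a Horn labelled program that is consistent (i.e. has at least one classical model). Then $P$ has a unique justified model, and it coincides with the least classical model of $P$.
   Context: Fix a finite non-empty set $\mathit{At}$ of propositional atoms. A labelled rule $r$ has the form $\ell : p_1 \vee \dots \vee p_m \leftarrow q_1 \wedge \dots \wedge q_n \wedge \neg s_1 \wedge \dots \wedge \neg s_j \wedge \neg\neg t_1 \wedge \dots \wedge \neg\neg t_k$ with $m,n,j,k \ge 0$ and atoms in $\mathit{At}$; $\mathit{Lb}(r)=\ell$, $\mathit{Hd}(r)=p_1\vee\dots\vee p_m$, $H(r)=\{p_1,\dots,p_m\}$, $\mathit{Bd}(r)$ is the whole antecedent, $\mathit{Bd}^+(r)=q_1\wedge\dots\wedge q_n$, $B^+(r)=\{q_1,\dots,q_n\}$, $\mathit{Bd}^-(r)=\neg s_1 \wedge \dots \wedge \neg s_j \wedge \neg\neg t_1 \wedge \dots \wedge \neg\neg t_k$. Empty disjunction is $\bot$, empty conjunction $\top$. A labelled program $P$ is a finite set of labelled rules with no repeated label; $\mathit{Lb}(P)$ is its set of labels. $P$ is Horn if $\mathit{Bd}^-(r)=\top$ and $|H(r)|\le 1$ for all $r\in P$ (so constraints $\bot\leftarrow q_1\wedge\dots\wedge q_n$ are allowed). An interpretation $I\subseteq\mathit{At}$ is a (classical) model of $P$ if $I\models \mathit{Bd}(r)\to\mathit{Hd}(r)$ for every $r\in P$. $\mathit{Sup}(I,P,p)=\{ r \in P \mid p \in H(r),\ I \models \mathit{Bd}(r)\}$. A support graph of a model $I$ under $P$ is a directed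 graph $G=\langle I,E,\lambda\rangle$ with vertex set $I$, edges $E\subseteq I\times I$ and a labelling $\lambda: I\to \mathit{Lb}(P)$ such that (i) $\lambda$ is injective, and (ii) for every $p\in I$, the rule $r\in P$ with $\mathit{Lb}(r)=\lambda(p)$ satisfies $r\in \mathit{Sup}(I,P,p)$ and $B^+(r)=\{q \mid (q,p)\in E\}$. An explanation is an acyclic support graph. A classical model $I$ of $P$ is a justified model if some explanation of $I$ under $P$ exists. *)

theory Defs
  imports Main
begin

text \<open>A labelled rule  l : p1 v ... v pm <- q1,...,qn, not s1,...,not sj, not not t1,...,not not tk.
  Atoms have type 'a, labels type 'l.\<close>
record ('a, 'l) lrule =
  Lb  :: 'l
  H   :: "'a set"
  Bp  :: "'a set"
  Bn  :: "'a set"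
  Bnn :: "'a set"

definition rule_over :: "'a set \<Rightarrow> ('a, 'l) lrule \<Rightarrow> bool" where
  "rule_over At r \<longleftrightarrow> finite (H r) \<and> finite (Bp r) \<and> finite (Bn r) \<and> finite (Bnn r) \<and>
     H r \<subseteq> At \<and> Bp r \<subseteq> At \<and> Bn r \<subseteq> At \<and> Bnn r \<subseteq> At"

definition labelled_program :: "'a set \<Rightarrow> ('a, 'l) lrule set \<Rightarrow> bool" where
  "labelled_program At P \<longleftrightarrow> finite P \<and> (\<forall>r\<in>P. rule_over At r) \<and> inj_on Lb P"

definition Lbs :: "('a, 'l) lrule set \<Rightarrow> 'l set" where
  "Lbs P = Lb ` P"

definition horn :: "('a, 'l) lrule set \<Rightarrow> bool" where
  "horn P \<longleftrightarrow> (\<forall>r\<in>P. Bn r = {} \<and> Bnn r = {} \<and> card (H r) \<le> 1)"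

text \<open>I |= Bd(r):  all q_i true, all s_i false, all t_i true (not not t = t classically).\<close>
definition sat_body :: "'a set \<Rightarrow> ('a, 'l) lrule \<Rightarrow> bool" where
  "sat_body I r \<longleftrightarrow> Bp r \<subseteq> I \<and> Bn r \<inter> I = {} \<and> Bnn r \<subseteq> I"

definition sat_head :: "'a set \<Rightarrow> ('a, 'l) lrule \<Rightarrow> bool" where
  "sat_head I r \<longleftrightarrow> H r \<inter> I \<noteq> {}"

definition is_model :: "'a set \<Rightarrow> ('a, 'l) lrule set \<Rightarrow> 'a set \<Rightarrow> bool" where
  "is_model At P I \<longleftrightarrow> I \<subseteq> At \<and> (\<forall>r\<in>P. sat_body I r \<longrightarrow> sat_head I r)"

definition consistent :: "'a set \<Rightarrow> ('a, 'l) lrule set \<Rightarrow> bool" where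
  "consistent At P \<longleftrightarrow> (\<exists>I. is_model At P I)"

definition least_model :: "'a set \<Rightarrow> ('a, 'l) lrule set \<Rightarrow> 'a set \<Rightarrow> bool" where
  "least_model At P I \<longleftrightarrow> is_model At P I \<and> (\<forall>J. is_model At P J \<longrightarrow> I \<subseteq> J)"

definition Sup :: "'a set \<Rightarrow> ('a, 'l) lrule set \<Rightarrow> 'a \<Rightarrow> ('a, 'l) lrule set" where
  "Sup I P p = {r \<in> P. p \<in> H r \<and> sat_body I r}"

definition support_graph ::
  "('a, 'l) lrule set \<Rightarrow> 'a set \<Rightarrow> ('a \<times> 'a) set \<Rightarrow> ('a \<Rightarrow> 'l) \<Rightarrow> bool" where
  "support_graph P I E lam \<longleftrightarrow>
     E \<subseteq> I \<times> I \<and> lam ` I \<subseteq> Lbs P \<and> inj_on lam I \<and>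
     (\<forall>p\<in>I. \<forall>r\<in>P. Lb r = lam p \<longrightarrow> r \<in> Sup I P p \<and> Bp r = {q. (q, p) \<in> E})"

definition explanation ::
  "('a, 'l) lrule set \<Rightarrow> 'a set \<Rightarrow> ('a \<times> 'a) set \<Rightarrow> ('a \<Rightarrow> 'l) \<Rightarrow> bool" where
  "explanation P I E lam \<longleftrightarrow> support_graph P I E lam \<and> acyclic E"

definition justified_model :: "'a set \<Rightarrow> ('a, 'l) lrule set \<Rightarrow> 'a set \<Rightarrow> bool" where
  "justified_model At P I \<longleftrightarrow> is_model At P I \<and> (\<exists>E lam. explanation P I E lam)"

end

theory Submission
  imports Defs
begin

fun level :: "('a, 'l) lrule set \<Rightarrow> nat \<Rightarrow> 'a set" where
  "level P 0 = {}"
| "level P (Suc n) = {p. \<exists>r\<in>P. H r = {p} \<and> Bp r \<subseteq> level P n}"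

lemma level_mono_Suc: "level P n \<subseteq> level P (Suc n)"
  apply (induction n)
   apply simp
  apply (simp only: level.simps)
  apply blast
  done

lemma level_mono: "m \<le> n \<Longrightarrow> level P m \<subseteq> level P n"
proof (induction n rule: dec_induct)
  case base then show ?case by simp
next
  case (step k) then show ?case using level_mono_Suc[of P k] by auto
qed

lemma finite_sub_level:
  assumes "finite B" "B \<subseteq> (\<Union>n. level P n)"
  shows "\<exists>n. B \<subseteq> level P n"
  using assms
proof (induction B rule: finite_induct)
  case empty then show ?case by auto
next
  case (insert x F)
  then obtain n where n: "F \<subseteq> level P n" by auto
  from insert obtain m where m: "x \<in> level P m" by auto
  have "F \<subseteq> level P (max n m)" using n level_mono[of n "max n m" P] by auto
  moreover have "x \<in> level P (max n m)" using m level_mono[of m "max n m" P] by auto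
  ultimately show ?case by blast
qed

lemma head_cases:
  assumes "finite (H r)" "card (H r) \<le> 1"
  shows "H r = {} \<or> (\<exists>p. H r = {p})"
proof (cases "card (H r)")
  case 0 then show ?thesis using assms by auto
next
  case (Suc k) then have "card (H r) = 1" using assms by auto
  then show ?thesis by (auto simp: card_Suc_eq)
qed

lemma level_sub_model:
  assumes "is_model At P J" "horn P"
  shows "level P n \<subseteq> J"
proof (induction n)
  case 0 then show ?case by simp
next
  case (Suc n)
  show ?case
  proof
    fix p assume "p \<in> level P (Suc n)"
    then obtain r where r: "r \<in> P" "H r = {p}" "Bp r \<subseteq> level P n" by auto
    have "sat_body J r" using r Suc assms(2) unfolding sat_body_def horn_def by auto
    then have "sat_head J r" using assms(1) r unfolding is_model_def by auto
    then show "p \<in> J" using r unfolding sat_head_def by auto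
  qed
qed

theorem proposition4:
  fixes At :: "'a set" and P :: "('a, 'l) lrule set"
  assumes "finite At" and "At \<noteq> {}"
    and "labelled_program At P"
    and "horn P"
    and "consistent At P"
  shows "\<exists>I. least_model At P I \<and> (\<forall>J. justified_model At P J \<longleftrightarrow> J = I)"
proof -
  define M where "M = (\<Union>n. level P n)"
  obtain J0 where J0: "is_model At P J0" using assms(5) unfolding consistent_def by auto
  have MJ: "M \<subseteq> J" if "is_model At P J" for J
    using level_sub_model[OF that assms(4)] unfolding M_def by auto
  have ro: "\<And>r. r \<in> P \<Longrightarrow> rule_over At r" using assms(3) unfolding labelled_program_def by auto
  have hc: "\<And>r. r \<in> P \<Longrightarrow> H r = {} \<or> (\<exists>p. H r = {p})"
    using ro assms(4) head_cases unfolding rule_over_def horn_def by blast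
  have hn: "\<And>r. r \<in> P \<Longrightarrow> Bn r = {} \<and> Bnn r = {}" using assms(4) unfolding horn_def by auto
  have modM: "is_model At P M"
    unfolding is_model_def
  proof (intro conjI ballI impI)
    show "M \<subseteq> At" using MJ[OF J0] J0 unfolding is_model_def by auto
  next
    fix r assume r: "r \<in> P" "sat_body M r"
    then have fin: "finite (Bp r)" using ro unfolding rule_over_def by auto
    from r have "Bp r \<subseteq> M" unfolding sat_body_def by auto
    then obtain n where n: "Bp r \<subseteq> level P n" using finite_sub_level[OF fin, of P] unfolding M_def by auto
    show "sat_head M r"
    proof (cases "H r = {}")
      case True
      have "sat_body J0 r" using r(2) MJ[OF J0] hn[OF r(1)] unfolding sat_body_def by auto
      then have "sat_head J0 r" using J0 r(1) unfolding is_model_def by auto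
      then show ?thesis using True unfolding sat_head_def by auto
    next
      case False
      then obtain p where p: "H r = {p}" using hc[OF r(1)] by auto
      then have "p \<in> level P (Suc n)" using r(1) n by auto
      then have "p \<in> M" unfolding M_def by blast
      then show ?thesis using p unfolding sat_head_def by auto
    qed
  qed
  have least: "least_model At P M" unfolding least_model_def using modM MJ by auto
  have MAt: "M \<subseteq> At" using modM unfolding is_model_def by auto
  define rk where "rk p = (LEAST n. p \<in> level P n)" for p
  have rk1: "p \<in> level P (rk p)" if "p \<in> M" for p
    using that unfolding M_def rk_def by (auto intro: LeastI)
  have rk2: "rk q \<le> n" if "q \<in> level P n" for q n
    unfolding rk_def using that by (auto intro: Least_le)
  define rp where "rp p = (SOME r. r \<in> P \<and> H r = {p} \<and> Bp r \<subseteq> level P (rk p - 1))" for p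
  have rp: "rp p \<in> P \<and> H (rp p) = {p} \<and> Bp (rp p) \<subseteq> level P (rk p - 1) \<and> 0 < rk p"
    if "p \<in> M" for p
  proof -
    have "p \<in> level P (rk p)" using rk1[OF that] .
    moreover have "rk p \<noteq> 0" using calculation by (cases "rk p") auto
    ultimately obtain k where k: "rk p = Suc k" "p \<in> level P (Suc k)" by (cases "rk p") auto
    then have "\<exists>r. r \<in> P \<and> H r = {p} \<and> Bp r \<subseteq> level P (rk p - 1)" by auto
    then have "rp p \<in> P \<and> H (rp p) = {p} \<and> Bp (rp p) \<subseteq> level P (rk p - 1)"
      unfolding rp_def by (rule someI_ex)
    then show ?thesis using k by simp
  qed
  define E where "E = {(q, p). p \<in> M \<and> q \<in> Bp (rp p)}"
  define lam where "lam p = Lb (rp p)" for p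
  have EM: "E \<subseteq> M \<times> M"
  proof
    fix x assume "x \<in> E"
    then obtain q p where x: "x = (q, p)" "p \<in> M" "q \<in> Bp (rp p)" unfolding E_def by auto
    then have "q \<in> level P (rk p - 1)" using rp[OF x(2)] by blast
    then have "q \<in> M" unfolding M_def by blast
    then show "x \<in> M \<times> M" using x by auto
  qed
  have Erk: "E \<subseteq> inv_image less_than rk"
  proof
    fix x assume "x \<in> E"
    then obtain q p where x: "x = (q, p)" "p \<in> M" "q \<in> Bp (rp p)" unfolding E_def by auto
    then have "rk q \<le> rk p - 1" using rp[OF x(2)] rk2 by blast
    then show "x \<in> inv_image less_than rk" using rp[OF x(2)] x by auto
  qed
  have "wf E" using wf_subset[OF wf_inv_image[OF wf_less_than] Erk] .
  then have acyc: "acyclic E" by (rule wf_acyclic)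
  have injLb: "inj_on Lb P" using assms(3) unfolding labelled_program_def by auto
  have sg: "support_graph P M E lam"
    unfolding support_graph_def
  proof (intro conjI ballI allI impI)
    show "E \<subseteq> M \<times> M" by (rule EM)
    show "lam ` M \<subseteq> Lbs P" unfolding lam_def Lbs_def using rp by auto
    show "inj_on lam M"
    proof (rule inj_onI)
      fix p p' assume "p \<in> M" "p' \<in> M" "lam p = lam p'"
      then have "rp p = rp p'" using injLb rp unfolding lam_def inj_on_def by metis
      then show "p = p'" using rp \<open>p \<in> M\<close> \<open>p' \<in> M\<close> by (metis singleton_inject)
    qed
  next
    fix p r assume p: "p \<in> M" and r: "r \<in> P" "Lb r = lam p"
    then have rr: "r = rp p" using injLb rp unfolding lam_def inj_on_def by metis
    have "Bp r \<subseteq> M" using rr rp[OF p] unfolding M_def by auto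
    then show "r \<in> Sup M P p" unfolding Sup_def sat_body_def using rr rp[OF p] hn r by auto
    show "Bp r = {q. (q, p) \<in> E}" using rr p unfolding E_def by auto
  qed
  have justM: "justified_model At P M"
    unfolding justified_model_def explanation_def using modM sg acyc by blast
  have uniq: "J = M" if jJ: "justified_model At P J" for J
  proof -
    obtain E' lam' where ex: "explanation P J E' lam'" and mJ: "is_model At P J"
      using jJ unfolding justified_model_def by auto
    have sg': "support_graph P J E' lam'" and ac': "acyclic E'" using ex unfolding explanation_def by auto
    have "J \<subseteq> At" using mJ unfolding is_model_def by auto
    then have "finite (J \<times> J)" using assms(1) finite_subset by blast
    then have "finite E'" using sg' unfolding support_graph_def by (meson finite_subset)
    then have wfE: "wf E'" using ac' by (rule finite_acyclic_wf)
    have "p \<in> J \<longrightarrow> p \<in> M" for p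
    proof (induction p rule: wf_induct[OF wfE])
      case (1 p)
      show ?case
      proof
        assume pJ: "p \<in> J"
        then have "lam' p \<in> Lbs P" using sg' unfolding support_graph_def by auto
        then obtain r where r: "r \<in> P" "Lb r = lam' p" unfolding Lbs_def by auto
        then have "r \<in> Sup J P p" "Bp r = {q. (q, p) \<in> E'}" using sg' pJ unfolding support_graph_def by auto
        then have ph: "p \<in> H r" and bp: "Bp r \<subseteq> M"
          using 1 sg' unfolding Sup_def support_graph_def by auto
        have "sat_body M r" using bp hn r(1) unfolding sat_body_def by auto
        then have "sat_head M r" using modM r(1) unfolding is_model_def by auto
        then have "H r \<inter> M \<noteq> {}" unfolding sat_head_def .
        then show "p \<in> M" using hc[OF r(1)] ph by auto
      qed
    qed
    then have "J \<subseteq> M" by auto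
    then show ?thesis using MJ[OF mJ] by auto
  qed
  show ?thesis using least justM uniq by blast
qed

end
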